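(* There exists a fragile graph containing no cycle of length $4$ and having chromatic number $4$.
   Context: All graphs are finite and simple. A graph is $k$-connected if it has at least $k+1$ vertices and no vertex cutset with at most $k-1$ vertices. A graph is fragile if it has no $3$-connected subgraph. *)

theory Defs
  imports Main
begin

definition graph :: "'a set \<Rightarrow> 'a set set \<Rightarrow> bool" where
  "graph V E \<longleftrightarrow> finite V \<and> (\<forall>e\<in>E. \<exists>u v. e = {u, v} \<and> u \<noteq> v \<and> u \<in> V \<and> v \<in> V)"

definition subgraph :: "'a set \<Rightarrow> 'a set set \<Rightarrow> 'a set \<Rightarrow> 'a set set \<Rightarrow> bool" where
  "subgraph W F V E \<longleftrightarrow> W \<subseteq> V \<and> F \<subseteq> E \<and> (\<forall>e\<in>F. e \<subseteq> W)"

inductive reachable :: "'a set \<Rightarrow> 'a set set \<Rightarrow> 'a \<Rightarrow> 'a \<Rightarrow> bool" for V E where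
  refl: "v \<in> V \<Longrightarrow> reachable V E v v"
| step: "reachable V E u v \<Longrightarrow> {v, w} \<in> E \<Longrightarrow> w \<in> V \<Longrightarrow> reachable V E u w"

definition connected_graph :: "'a set \<Rightarrow> 'a set set \<Rightarrow> bool" where
  "connected_graph V E \<longleftrightarrow> (\<forall>u\<in>V. \<forall>v\<in>V. reachable V E u v)"

definition del_verts :: "'a set set \<Rightarrow> 'a set \<Rightarrow> 'a set set" where
  "del_verts E S = {e \<in> E. e \<inter> S = {}}"

definition k_connected :: "nat \<Rightarrow> 'a set \<Rightarrow> 'a set set \<Rightarrow> bool" where
  "k_connected k V E \<longleftrightarrow> card V \<ge> k + 1 \<and>
     (\<forall>S. S \<subseteq> V \<and> card S \<le> k - 1 \<longrightarrow> connected_graph (V - S) (del_verts E S))"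

definition fragile :: "'a set \<Rightarrow> 'a set set \<Rightarrow> bool" where
  "fragile V E \<longleftrightarrow> \<not> (\<exists>W F. subgraph W F V E \<and> k_connected 3 W F)"

definition has_C4 :: "'a set \<Rightarrow> 'a set set \<Rightarrow> bool" where
  "has_C4 V E \<longleftrightarrow> (\<exists>a b c d. a \<in> V \<and> b \<in> V \<and> c \<in> V \<and> d \<in> V \<and> distinct [a, b, c, d] \<and>
      {a, b} \<in> E \<and> {b, c} \<in> E \<and> {c, d} \<in> E \<and> {d, a} \<in> E)"

definition proper_colouring :: "'a set \<Rightarrow> 'a set set \<Rightarrow> nat \<Rightarrow> ('a \<Rightarrow> nat) \<Rightarrow> bool" where
  "proper_colouring V E k c \<longleftrightarrow> (\<forall>v\<in>V. c v < k) \<and> (\<forall>u v. {u, v} \<in> E \<longrightarrow> u \<noteq> v \<longrightarrow> c u \<noteq> c v)"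

definition chromatic_number :: "'a set \<Rightarrow> 'a set set \<Rightarrow> nat" where
  "chromatic_number V E = (LEAST k. \<exists>c. proper_colouring V E k c)"

end

theory Submission
  imports Defs
begin

definition nbl :: "nat list list" where "nbl = [[1,2,4,9], [0,2,10,15], [0,1,16,21], [6,7,12,13,18,19], [0,5,6], [4,6,8], [3,4,5], [3,8,9], [5,7,9], [0,7,8], [1,11,12], [10,12,14], [3,10,11], [3,14,15], [11,13,15], [1,13,14], [2,17,18], [16,18,20], [3,16,17], [3,20,21], [17,19,21], [2,19,20]]"

definition colL :: "nat list" where "colL = [0, 1, 2, 0, 1, 0, 2, 1, 2, 3, 0, 1, 2, 1, 0, 2, 0, 1, 2, 1, 0, 3]"

definition V0 :: "nat set" where "V0 = {..<22}"
definition E0 :: "nat set set" where "E0 = {{u,v} | u v. u < 22 \<and> v \<in> set (nbl ! u)}"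

lemma symc: "\<forall>u\<in>set [0..<22]. \<forall>v\<in>set (nbl!u). v<22 \<and> u \<in> set(nbl!v) \<and> u\<noteq>v"
  by code_simp

lemma c4c: "\<forall>a\<in>set [0..<22]. \<forall>c\<in>set [0..<22]. a \<noteq> c \<longrightarrow> length (filter (\<lambda>b. b \<in> set (nbl!c)) (nbl!a)) \<le> 1"
  by code_simp

lemma colc: "\<forall>u\<in>set [0..<22]. colL ! u < 4 \<and> (\<forall>v\<in>set (nbl!u). colL ! u \<noteq> colL ! v)"
  by code_simp

lemma symm: assumes "u<22" "v \<in> set (nbl!u)" shows "v<22 \<and> u \<in> set(nbl!v) \<and> u\<noteq>v"
proof -
  have "u \<in> set [0..<22]" using assms(1) by (simp only: set_upt atLeastLessThan_iff) simp
  from bspec[OF bspec[OF symc this] assms(2)] show ?thesis .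
qed

lemma edge_iff: "{a,b} \<in> E0 \<longleftrightarrow> a < 22 \<and> b \<in> set (nbl!a)"
proof
  assume "{a,b} \<in> E0"
  then obtain u v where uv: "{a,b} = {u,v}" "u < 22" "v \<in> set (nbl!u)" unfolding E0_def by blast
  from uv(1) have "(a = u \<and> b = v) \<or> (a = v \<and> b = u)" by (simp add: doubleton_eq_iff)
  thus "a < 22 \<and> b \<in> set (nbl!a)"
  proof
    assume "a = u \<and> b = v" thus ?thesis using uv by simp
  next
    assume "a = v \<and> b = u" thus ?thesis using uv symm[of u v] by simp
  qed
next
  assume "a < 22 \<and> b \<in> set (nbl!a)"
  thus "{a,b} \<in> E0" unfolding E0_def by blast
qed

lemma graphG: "graph V0 E0"
  unfolding graph_def
proof
  show "finite V0" unfolding V0_def by simp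
  show "\<forall>e\<in>E0. \<exists>u v. e = {u, v} \<and> u \<noteq> v \<and> u \<in> V0 \<and> v \<in> V0"
  proof
    fix e assume "e \<in> E0"
    then obtain u v where uv: "e = {u,v}" "u < 22" "v \<in> set (nbl!u)" unfolding E0_def by blast
    have "v < 22 \<and> u \<noteq> v" using symm[OF uv(2,3)] by blast
    thus "\<exists>u v. e = {u, v} \<and> u \<noteq> v \<and> u \<in> V0 \<and> v \<in> V0" using uv unfolding V0_def by blast
  qed
qed

lemma noC4: "\<not> has_C4 V0 E0"
proof
  assume "has_C4 V0 E0"
  then obtain a b c d where d: "distinct [a,b,c,d]" "{a,b} \<in> E0" "{b,c} \<in> E0" "{c,d} \<in> E0" "{d,a} \<in> E0"
    unfolding has_C4_def by blast
  have e2: "{c,b} \<in> E0" "{a,d} \<in> E0" using d by (simp_all add: insert_commute)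
  have a: "a < 22" "b \<in> set (nbl!a)" "d \<in> set (nbl!a)" using d e2 edge_iff by auto
  have c: "c < 22" "b \<in> set (nbl!c)" "d \<in> set (nbl!c)" using d e2 edge_iff by auto
  let ?l = "filter (\<lambda>b. b \<in> set (nbl!c)) (nbl!a)"
  have "a \<in> set [0..<22]" "c \<in> set [0..<22]" using a c by simp_all
  from bspec[OF bspec[OF c4c this(1)] this(2)] have "length ?l \<le> 1" using d by simp
  moreover have "{b,d} \<subseteq> set ?l" using a c by auto
  hence "card {b,d} \<le> card (set ?l)" by (simp add: card_mono)
  moreover have "card (set ?l) \<le> length ?l" by (rule card_length)
  moreover have "card {b,d} = 2" using d by auto
  ultimately show False by linarith
qed

lemma three:
  fixes a b c d :: nat
  assumes "a<3" "b<3" "c<3" "d<3" "a\<noteq>b" "a\<noteq>c" "b\<noteq>c" "d\<noteq>a" "d\<noteq>c"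
  shows "d = b"
  using assms by (auto simp: less_Suc_eq numeral_eq_Suc)

lemma gad:
  fixes x0 x1 x2 x3 x4 x5 x6 x7 :: nat
  assumes "x0<3" "x1<3" "x2<3" "x3<3" "x4<3" "x5<3" "x6<3" "x7<3"
    "x0\<noteq>x1" "x0\<noteq>x2" "x1\<noteq>x2" "x0\<noteq>x7" "x1\<noteq>x5" "x2\<noteq>x3" "x3\<noteq>x4" "x4\<noteq>x5" "x4\<noteq>x6" "x5\<noteq>x6" "x6\<noteq>x7"
  shows "x3\<noteq>x7"
proof
  assume eq: "x3 = x7"
  have h1: "x3 = x1" by (rule three[of x0 x1 x2 x3]) (use assms eq in auto)
  have "x6 = x1" by (rule three[of x4 x1 x5 x6]) (use assms h1 in auto)
  thus False using assms eq h1 by simp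
qed

lemma four:
  fixes a b c d :: nat
  assumes "a<3" "b<3" "c<3" "d<3" "a\<noteq>b" "a\<noteq>c" "b\<noteq>c" "d\<noteq>a" "d\<noteq>b" "d\<noteq>c"
  shows False
  using three[of a b c d] assms by blast

lemma no3:
  assumes p: "proper_colouring V0 E0 k c" and k: "k \<le> 3"
  shows False
proof -
  have E: "\<And>u v. u<22 \<Longrightarrow> v\<in>set(nbl!u) \<Longrightarrow> c u \<noteq> c v"
    using p symm edge_iff unfolding proper_colouring_def by blast
  have B: "c v < 3" if "v < 22" for v
  proof -
    have "c v < k" using p that unfolding proper_colouring_def V0_def by auto
    thus ?thesis using k by linarith
  qed

  have b0: "c 0 < 3" by (rule B) simp
  have b1: "c 1 < 3" by (rule B) simp
  have b2: "c 2 < 3" by (rule B) simp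
  have b3: "c 3 < 3" by (rule B) simp
  have b4: "c 4 < 3" by (rule B) simp
  have b5: "c 5 < 3" by (rule B) simp
  have b6: "c 6 < 3" by (rule B) simp
  have b7: "c 7 < 3" by (rule B) simp
  have b8: "c 8 < 3" by (rule B) simp
  have b9: "c 9 < 3" by (rule B) simp
  have b10: "c 10 < 3" by (rule B) simp
  have b11: "c 11 < 3" by (rule B) simp
  have b12: "c 12 < 3" by (rule B) simp
  have b13: "c 13 < 3" by (rule B) simp
  have b14: "c 14 < 3" by (rule B) simp
  have b15: "c 15 < 3" by (rule B) simp
  have b16: "c 16 < 3" by (rule B) simp
  have b17: "c 17 < 3" by (rule B) simp
  have b18: "c 18 < 3" by (rule B) simp
  have b19: "c 19 < 3" by (rule B) simp
  have b20: "c 20 < 3" by (rule B) simp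
  have b21: "c 21 < 3" by (rule B) simp
  have e0: "c 0 \<noteq> c 1" by (rule E) (simp_all add: nbl_def)
  have e1: "c 0 \<noteq> c 2" by (rule E) (simp_all add: nbl_def)
  have e2: "c 1 \<noteq> c 2" by (rule E) (simp_all add: nbl_def)
  have e3: "c 4 \<noteq> c 5" by (rule E) (simp_all add: nbl_def)
  have e4: "c 4 \<noteq> c 6" by (rule E) (simp_all add: nbl_def)
  have e5: "c 5 \<noteq> c 6" by (rule E) (simp_all add: nbl_def)
  have e6: "c 4 \<noteq> c 0" by (rule E) (simp_all add: nbl_def)
  have e7: "c 5 \<noteq> c 8" by (rule E) (simp_all add: nbl_def)
  have e8: "c 6 \<noteq> c 3" by (rule E) (simp_all add: nbl_def)
  have e9: "c 3 \<noteq> c 7" by (rule E) (simp_all add: nbl_def)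
  have e10: "c 7 \<noteq> c 8" by (rule E) (simp_all add: nbl_def)
  have e11: "c 7 \<noteq> c 9" by (rule E) (simp_all add: nbl_def)
  have e12: "c 8 \<noteq> c 9" by (rule E) (simp_all add: nbl_def)
  have e13: "c 9 \<noteq> c 0" by (rule E) (simp_all add: nbl_def)
  have e14: "c 10 \<noteq> c 11" by (rule E) (simp_all add: nbl_def)
  have e15: "c 10 \<noteq> c 12" by (rule E) (simp_all add: nbl_def)
  have e16: "c 11 \<noteq> c 12" by (rule E) (simp_all add: nbl_def)
  have e17: "c 10 \<noteq> c 1" by (rule E) (simp_all add: nbl_def)
  have e18: "c 11 \<noteq> c 14" by (rule E) (simp_all add: nbl_def)
  have e19: "c 12 \<noteq> c 3" by (rule E) (simp_all add: nbl_def)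
  have e20: "c 3 \<noteq> c 13" by (rule E) (simp_all add: nbl_def)
  have e21: "c 13 \<noteq> c 14" by (rule E) (simp_all add: nbl_def)
  have e22: "c 13 \<noteq> c 15" by (rule E) (simp_all add: nbl_def)
  have e23: "c 14 \<noteq> c 15" by (rule E) (simp_all add: nbl_def)
  have e24: "c 15 \<noteq> c 1" by (rule E) (simp_all add: nbl_def)
  have e25: "c 16 \<noteq> c 17" by (rule E) (simp_all add: nbl_def)
  have e26: "c 16 \<noteq> c 18" by (rule E) (simp_all add: nbl_def)
  have e27: "c 17 \<noteq> c 18" by (rule E) (simp_all add: nbl_def)
  have e28: "c 16 \<noteq> c 2" by (rule E) (simp_all add: nbl_def)
  have e29: "c 17 \<noteq> c 20" by (rule E) (simp_all add: nbl_def)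
  have e30: "c 18 \<noteq> c 3" by (rule E) (simp_all add: nbl_def)
  have e31: "c 3 \<noteq> c 19" by (rule E) (simp_all add: nbl_def)
  have e32: "c 19 \<noteq> c 20" by (rule E) (simp_all add: nbl_def)
  have e33: "c 19 \<noteq> c 21" by (rule E) (simp_all add: nbl_def)
  have e34: "c 20 \<noteq> c 21" by (rule E) (simp_all add: nbl_def)
  have e35: "c 21 \<noteq> c 2" by (rule E) (simp_all add: nbl_def)
  have g0: "c 3 \<noteq> c 0" by (rule gad[of "c 4" "c 5" "c 6" "c 3" "c 7" "c 8" "c 9" "c 0"], simp_all only: b0 b1 b2 b3 b4 b5 b6 b7 b8 b9 b10 b11 b12 b13 b14 b15 b16 b17 b18 b19 b20 b21 e0 e1 e2 e3 e4 e5 e6 e7 e8 e9 e10 e11 e12 e13 e14 e15 e16 e17 e18 e19 e20 e21 e22 e23 e24 e25 e26 e27 e28 e29 e30 e31 e32 e33 e34 e35 not_False_eq_True)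
  have g1: "c 3 \<noteq> c 1" by (rule gad[of "c 10" "c 11" "c 12" "c 3" "c 13" "c 14" "c 15" "c 1"], simp_all only: b0 b1 b2 b3 b4 b5 b6 b7 b8 b9 b10 b11 b12 b13 b14 b15 b16 b17 b18 b19 b20 b21 e0 e1 e2 e3 e4 e5 e6 e7 e8 e9 e10 e11 e12 e13 e14 e15 e16 e17 e18 e19 e20 e21 e22 e23 e24 e25 e26 e27 e28 e29 e30 e31 e32 e33 e34 e35 not_False_eq_True)
  have g2: "c 3 \<noteq> c 2" by (rule gad[of "c 16" "c 17" "c 18" "c 3" "c 19" "c 20" "c 21" "c 2"], simp_all only: b0 b1 b2 b3 b4 b5 b6 b7 b8 b9 b10 b11 b12 b13 b14 b15 b16 b17 b18 b19 b20 b21 e0 e1 e2 e3 e4 e5 e6 e7 e8 e9 e10 e11 e12 e13 e14 e15 e16 e17 e18 e19 e20 e21 e22 e23 e24 e25 e26 e27 e28 e29 e30 e31 e32 e33 e34 e35 not_False_eq_True)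
  show False by (rule four[of "c 0" "c 1" "c 2" "c 3"]) (use b0 b1 b2 b3 e0 e1 e2 g0 g1 g2 in auto)
qed

lemma chrom: "chromatic_number V0 E0 = 4"
  unfolding chromatic_number_def
proof (rule Least_equality)
  show "\<exists>c. proper_colouring V0 E0 4 c"
  proof
    show "proper_colouring V0 E0 4 (\<lambda>v. colL ! v)"
      unfolding proper_colouring_def V0_def
    proof (intro conjI allI impI ballI)
      fix v :: nat assume "v \<in> {..<22}"
      hence "v \<in> set [0..<22]" by simp
      from bspec[OF colc this] show "colL ! v < 4" by blast
    next
      fix u v assume "{u,v} \<in> E0" "u \<noteq> v"
      hence uv: "u \<in> set [0..<22]" "v \<in> set (nbl!u)" using edge_iff by simp_all
      from bspec[OF colc uv(1)] uv(2) show "colL ! u \<noteq> colL ! v" by blast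
    qed
  qed
next
  fix k assume "\<exists>c. proper_colouring V0 E0 k c"
  then obtain c where "proper_colouring V0 E0 k c" by blast
  show "4 \<le> k"
  proof (rule ccontr)
    assume "\<not> 4 \<le> k"
    hence "k \<le> 3" by simp
    thus False using no3 \<open>proper_colouring V0 E0 k c\<close> by blast
  qed
qed

lemma reach_stay:
  assumes "reachable V E u y" "P u" "\<And>v x. P v \<Longrightarrow> {v,x} \<in> E \<Longrightarrow> x \<in> V \<Longrightarrow> P x"
  shows "P y"
  using assms by (induction rule: reachable.induct) auto

lemma finW: "subgraph W F V0 E0 \<Longrightarrow> finite W"
  unfolding subgraph_def V0_def by (auto intro: finite_subset)

lemma deg:
  assumes sub: "subgraph W F V0 E0" and kc: "k_connected 3 W F" and w: "w \<in> W"
  shows "3 \<le> card {u\<in>W. u\<noteq>w \<and> {w,u}\<in>E0}"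
proof (rule ccontr)
  assume nt: "\<not> ?thesis"
  let ?N = "{u\<in>W. u\<noteq>w \<and> {w,u}\<in>F}"
  have fin: "finite W" using finW[OF sub] .
  have "?N \<subseteq> {u\<in>W. u\<noteq>w \<and> {w,u}\<in>E0}" using sub unfolding subgraph_def by auto
  hence "card ?N \<le> card {u\<in>W. u\<noteq>w \<and> {w,u}\<in>E0}" using fin by (intro card_mono) auto
  hence cN: "card ?N \<le> 2" using nt by linarith
  have finN: "finite ?N" using fin by auto
  have cW: "card W \<ge> 4" using kc unfolding k_connected_def by simp
  have "card (insert w ?N) \<le> 3" using cN finN by (simp add: card_insert_if)
  have "\<not> W \<subseteq> insert w ?N"
  proof
    assume "W \<subseteq> insert w ?N"
    hence "card W \<le> card (insert w ?N)" using finN by (intro card_mono) auto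
    thus False using \<open>card (insert w ?N) \<le> 3\<close> cW by linarith
  qed
  then obtain z where z: "z \<in> W" "z \<notin> insert w ?N" by blast
  have conn: "connected_graph (W - ?N) (del_verts F ?N)" using kc cN unfolding k_connected_def by auto
  hence r: "reachable (W - ?N) (del_verts F ?N) w z" using w z unfolding connected_graph_def by auto
  have "z = w"
    by (rule reach_stay[OF r, where P="\<lambda>y. y = w"]) (auto simp: del_verts_def)
  thus False using z by auto
qed

lemma cut:
  assumes sub: "subgraph W F V0 E0" and kc: "k_connected 3 W F"
    and a: "a \<in> W" "a \<in> I" and b: "b \<in> W" "b \<notin> I" "b \<notin> T"
    and T: "finite T" "card T \<le> 2" "I \<inter> T = {}"
    and nb: "\<And>v u. v \<in> I \<Longrightarrow> {v,u} \<in> E0 \<Longrightarrow> u \<in> I \<union> T"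
  shows False
proof -
  let ?S = "W \<inter> T"
  have "card ?S \<le> card T" using T by (intro card_mono) auto
  hence "card ?S \<le> 2" using T by linarith
  hence conn: "connected_graph (W - ?S) (del_verts F ?S)" using kc unfolding k_connected_def by auto
  have "a \<in> W - ?S" "b \<in> W - ?S" using a b T by auto
  hence r: "reachable (W - ?S) (del_verts F ?S) a b" using conn unfolding connected_graph_def by auto
  have FE: "F \<subseteq> E0" using sub unfolding subgraph_def by auto
  have "b \<in> I"
  proof (rule reach_stay[OF r, where P="\<lambda>y. y \<in> I"])
    show "a \<in> I" by (rule a)
  next
    fix v x assume "v \<in> I" "{v,x} \<in> del_verts F ?S" "x \<in> W - ?S"
    hence "x \<in> I \<union> T" "x \<notin> T" using nb FE unfolding del_verts_def by auto
    thus "x \<in> I" by auto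
  qed
  thus False using b by auto
qed

lemma peel:
  assumes D: "\<forall>w\<in>W. 3 \<le> card {u\<in>W. u\<noteq>w \<and> {w,u}\<in>E0}" and WS: "W \<subseteq> S"
    and c: "card (set (nbl!v) \<inter> S) \<le> 2"
  shows "W \<subseteq> S - {v}"
proof -
  have "v \<notin> W"
  proof
    assume v: "v \<in> W"
    have "{u\<in>W. u\<noteq>v \<and> {v,u}\<in>E0} \<subseteq> set (nbl!v) \<inter> S" using WS edge_iff by auto
    hence "card {u\<in>W. u\<noteq>v \<and> {v,u}\<in>E0} \<le> card (set (nbl!v) \<inter> S)" by (intro card_mono) auto
    thus False using D v c by fastforce
  qed
  thus ?thesis using WS by auto
qed

lemma cover: "\<forall>x\<in>set [0..<22]. x \<in> {4,5,6,7,8,9} \<or> x \<in> {10,11,12,13,14,15} \<or> x \<in> {16,17,18,19,20,21} \<or> x \<in> {0,1,2,3}"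
  by code_simp

lemma fragG: "fragile V0 E0"
  unfolding fragile_def
proof clarify
  fix W F assume sub: "subgraph W F V0 E0" and kc: "k_connected 3 W F"
  have D: "\<forall>w\<in>W. 3 \<le> card {u\<in>W. u\<noteq>w \<and> {w,u}\<in>E0}" using deg sub kc by blast
  have P: "\<And>S v. W \<subseteq> S \<Longrightarrow> card (set (nbl!v) \<inter> S) \<le> 2 \<Longrightarrow> W \<subseteq> S - {v}" using peel D by blast
  have cW: "card W \<ge> 4" using kc unfolding k_connected_def by simp
  have ne: "W \<noteq> {}" using cW by auto
  have WV: "W \<subseteq> {..<22}" using sub unfolding subgraph_def V0_def by auto

  have G0: "W \<inter> {4,5,6,7,8,9} = {}"
  proof (rule ccontr)
    assume "W \<inter> {4,5,6,7,8,9} \<noteq> {}"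
    then obtain a where a: "a \<in> W" "a \<in> {4,5,6,7,8,9}" by blast
    have s0: "W \<subseteq> {0,3,4,5,6,7,8,9}"
    proof
      fix b assume b: "b \<in> W"
      show "b \<in> {0,3,4,5,6,7,8,9}"
      proof (rule ccontr)
        assume "b \<notin> {0,3,4,5,6,7,8,9}"
        hence "b \<notin> {4,5,6,7,8,9}" "b \<notin> {0,3}" by auto
        thus False by (rule cut[OF sub kc a b]) (auto simp: edge_iff nbl_def)
      qed
    qed
    have "W \<subseteq> {0,3,4,5,6,7,8,9} - {0}" by (rule P[OF s0]) (simp add: nbl_def)
    hence s1: "W \<subseteq> {3,4,5,6,7,8,9}" by auto
    have "W \<subseteq> {3,4,5,6,7,8,9} - {3}" by (rule P[OF s1]) (simp add: nbl_def)
    hence s2: "W \<subseteq> {4,5,6,7,8,9}" by auto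
    have "W \<subseteq> {4,5,6,7,8,9} - {6}" by (rule P[OF s2]) (simp add: nbl_def)
    hence s3: "W \<subseteq> {4,5,7,8,9}" by auto
    have "W \<subseteq> {4,5,7,8,9} - {4}" by (rule P[OF s3]) (simp add: nbl_def)
    hence s4: "W \<subseteq> {5,7,8,9}" by auto
    have "W \<subseteq> {5,7,8,9} - {5}" by (rule P[OF s4]) (simp add: nbl_def)
    hence s5: "W \<subseteq> {7,8,9}" by auto
    have "W \<subseteq> {7,8,9} - {7}" by (rule P[OF s5]) (simp add: nbl_def)
    hence s6: "W \<subseteq> {8,9}" by auto
    have "W \<subseteq> {8,9} - {8}" by (rule P[OF s6]) (simp add: nbl_def)
    hence s7: "W \<subseteq> {9}" by auto
    have "W \<subseteq> {9} - {9}" by (rule P[OF s7]) (simp add: nbl_def)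
    hence s8: "W \<subseteq> {}" by auto
    thus False using ne by auto
  qed
  have G1: "W \<inter> {10,11,12,13,14,15} = {}"
  proof (rule ccontr)
    assume "W \<inter> {10,11,12,13,14,15} \<noteq> {}"
    then obtain a where a: "a \<in> W" "a \<in> {10,11,12,13,14,15}" by blast
    have s0: "W \<subseteq> {1,3,10,11,12,13,14,15}"
    proof
      fix b assume b: "b \<in> W"
      show "b \<in> {1,3,10,11,12,13,14,15}"
      proof (rule ccontr)
        assume "b \<notin> {1,3,10,11,12,13,14,15}"
        hence "b \<notin> {10,11,12,13,14,15}" "b \<notin> {1,3}" by auto
        thus False by (rule cut[OF sub kc a b]) (auto simp: edge_iff nbl_def)
      qed
    qed
    have "W \<subseteq> {1,3,10,11,12,13,14,15} - {1}" by (rule P[OF s0]) (simp add: nbl_def)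
    hence s1: "W \<subseteq> {3,10,11,12,13,14,15}" by auto
    have "W \<subseteq> {3,10,11,12,13,14,15} - {3}" by (rule P[OF s1]) (simp add: nbl_def)
    hence s2: "W \<subseteq> {10,11,12,13,14,15}" by auto
    have "W \<subseteq> {10,11,12,13,14,15} - {12}" by (rule P[OF s2]) (simp add: nbl_def)
    hence s3: "W \<subseteq> {10,11,13,14,15}" by auto
    have "W \<subseteq> {10,11,13,14,15} - {10}" by (rule P[OF s3]) (simp add: nbl_def)
    hence s4: "W \<subseteq> {11,13,14,15}" by auto
    have "W \<subseteq> {11,13,14,15} - {11}" by (rule P[OF s4]) (simp add: nbl_def)
    hence s5: "W \<subseteq> {13,14,15}" by auto
    have "W \<subseteq> {13,14,15} - {13}" by (rule P[OF s5]) (simp add: nbl_def)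
    hence s6: "W \<subseteq> {14,15}" by auto
    have "W \<subseteq> {14,15} - {14}" by (rule P[OF s6]) (simp add: nbl_def)
    hence s7: "W \<subseteq> {15}" by auto
    have "W \<subseteq> {15} - {15}" by (rule P[OF s7]) (simp add: nbl_def)
    hence s8: "W \<subseteq> {}" by auto
    thus False using ne by auto
  qed
  have G2: "W \<inter> {16,17,18,19,20,21} = {}"
  proof (rule ccontr)
    assume "W \<inter> {16,17,18,19,20,21} \<noteq> {}"
    then obtain a where a: "a \<in> W" "a \<in> {16,17,18,19,20,21}" by blast
    have s0: "W \<subseteq> {2,3,16,17,18,19,20,21}"
    proof
      fix b assume b: "b \<in> W"
      show "b \<in> {2,3,16,17,18,19,20,21}"
      proof (rule ccontr)
        assume "b \<notin> {2,3,16,17,18,19,20,21}"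
        hence "b \<notin> {16,17,18,19,20,21}" "b \<notin> {2,3}" by auto
        thus False by (rule cut[OF sub kc a b]) (auto simp: edge_iff nbl_def)
      qed
    qed
    have "W \<subseteq> {2,3,16,17,18,19,20,21} - {2}" by (rule P[OF s0]) (simp add: nbl_def)
    hence s1: "W \<subseteq> {3,16,17,18,19,20,21}" by auto
    have "W \<subseteq> {3,16,17,18,19,20,21} - {3}" by (rule P[OF s1]) (simp add: nbl_def)
    hence s2: "W \<subseteq> {16,17,18,19,20,21}" by auto
    have "W \<subseteq> {16,17,18,19,20,21} - {18}" by (rule P[OF s2]) (simp add: nbl_def)
    hence s3: "W \<subseteq> {16,17,19,20,21}" by auto
    have "W \<subseteq> {16,17,19,20,21} - {16}" by (rule P[OF s3]) (simp add: nbl_def)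
    hence s4: "W \<subseteq> {17,19,20,21}" by auto
    have "W \<subseteq> {17,19,20,21} - {17}" by (rule P[OF s4]) (simp add: nbl_def)
    hence s5: "W \<subseteq> {19,20,21}" by auto
    have "W \<subseteq> {19,20,21} - {19}" by (rule P[OF s5]) (simp add: nbl_def)
    hence s6: "W \<subseteq> {20,21}" by auto
    have "W \<subseteq> {20,21} - {20}" by (rule P[OF s6]) (simp add: nbl_def)
    hence s7: "W \<subseteq> {21}" by auto
    have "W \<subseteq> {21} - {21}" by (rule P[OF s7]) (simp add: nbl_def)
    hence s8: "W \<subseteq> {}" by auto
    thus False using ne by auto
  qed
  have s0: "W \<subseteq> {0,1,2,3}"
  proof
    fix x assume x: "x \<in> W"
    hence "x \<in> set [0..<22]" using WV by auto
    from bspec[OF cover this] have "x \<in> {4,5,6,7,8,9} \<or> x \<in> {10,11,12,13,14,15} \<or> x \<in> {16,17,18,19,20,21} \<or> x \<in> {0,1,2,3}" .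
    thus "x \<in> {0,1,2,3}" using x G0 G1 G2 by (metis IntI empty_iff)
  qed
  have "W \<subseteq> {0,1,2,3} - {3}" by (rule P[OF s0]) (simp add: nbl_def)
  hence s1: "W \<subseteq> {0,1,2}" by auto
  have "W \<subseteq> {0,1,2} - {0}" by (rule P[OF s1]) (simp add: nbl_def)
  hence s2: "W \<subseteq> {1,2}" by auto
  have "W \<subseteq> {1,2} - {1}" by (rule P[OF s2]) (simp add: nbl_def)
  hence s3: "W \<subseteq> {2}" by auto
  have "W \<subseteq> {2} - {2}" by (rule P[OF s3]) (simp add: nbl_def)
  hence s4: "W \<subseteq> {}" by auto
  thus False using ne by auto
qed

theorem mainTheorem7:
  shows "\<exists>(V :: nat set) E. graph V E \<and> fragile V E \<and> \<not> has_C4 V E \<and> chromatic_number V E = 4"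
  using graphG fragG noC4 chrom by blast

end
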